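(* Let $X=[a,b]\subseteq\mathbb{R}$ with $a<b$ and let $\mathcal{U}$ be the set of all continuous preferences on $[a,b]$ with a unique top. (i) A median voter scheme $f^\alpha:\mathcal{U}^n\to[a,b]$ with fixed ballots $\alpha_1\le\dots\le\alpha_{n-1}$ in $[a,b]$ is NOM if and only if $\alpha_1=a$ and $\alpha_{n-1}=b$. (ii) A non-dictatorial generalized median voter scheme $f^p:\mathcal{U}^n\to[a,b]$ is NOM if and only if $p_{N\setminus\{i\}}=a$ and $p_{\{i\}}=b$ for each $i\in N$.
   Context: $N=\{1,\dots,n\}$, $n\ge2$. A preference in $\mathcal{U}$ is a continuous complete and transitive binary relation $R_i$ on $[a,b]$ (indifferences between non-top alternatives allowed) with a unique best element $t(R_i)$; $P_i$ denotes its strict part. Median voter scheme: $f^\alpha(R)=\mathrm{med}\{t(R_1),\dots,t(R_n),\alpha_1,\dots,\alpha_{n-1}\}$. A monotonic family of fixed ballots is $p=\{p_S\}_{S\subseteq N}$ with $p_S\in[a,b]$, $p_N=a$, $p_\emptyset=b$, and $p_Q\le p_T$ whenever $T\subseteq Q$; the generalized median voter scheme is $f^p(R)=\min_{S\subseteq N}\max_{j\in S}\{t(R_j),p_S\}$. A rule is dictatorial if there is $i$ with $f(R)=t(R_i)$ for all $R$. Option set $O(R_i)=\{f(R_i,R_{-i}):R_{-i}\in\mathcal{U}^{n-1}\}$ (for these rules a closed interval). For a nonempty compact $Y$, let $B(R_i,Y)$ and $W(R_i,Y)$ denote an $R_i$-best and an $R_i$-worst element of $Y$. $R_i'$ is a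 manipulation at $R_i$ if $f(R_i',R_{-i})\,P_i\,f(R_i,R_{-i})$ for some $R_{-i}$; it is obvious if $W(R_i,O(R_i'))\,P_i\,W(R_i,O(R_i))$ or $B(R_i,O(R_i'))\,P_i\,B(R_i,O(R_i))$. The rule is NOM if it admits no obvious manipulation. *)

theory Defs
  imports "HOL-Analysis.Analysis"
begin

type_synonym pref = "real \<Rightarrow> real \<Rightarrow> bool"   (* R x y : x is weakly preferred to y *)
type_synonym profile = "nat \<Rightarrow> pref"            (* agents 1..n *)

definition strict :: "pref \<Rightarrow> real \<Rightarrow> real \<Rightarrow> bool" where
  "strict R x y \<longleftrightarrow> R x y \<and> \<not> R y x"

definition is_best_in :: "pref \<Rightarrow> real set \<Rightarrow> real \<Rightarrow> bool" where
  "is_best_in R Y y \<longleftrightarrow> y \<in> Y \<and> (\<forall>z\<in>Y. R y z)"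

definition is_worst_in :: "pref \<Rightarrow> real set \<Rightarrow> real \<Rightarrow> bool" where
  "is_worst_in R Y y \<longleftrightarrow> y \<in> Y \<and> (\<forall>z\<in>Y. R z y)"

definition in_U :: "real \<Rightarrow> real \<Rightarrow> pref \<Rightarrow> bool" where
  "in_U a b R \<longleftrightarrow>
     (\<forall>x y. R x y \<longrightarrow> x \<in> {a..b} \<and> y \<in> {a..b}) \<and>
     (\<forall>x\<in>{a..b}. \<forall>y\<in>{a..b}. R x y \<or> R y x) \<and>
     (\<forall>x\<in>{a..b}. \<forall>y\<in>{a..b}. \<forall>z\<in>{a..b}. R x y \<longrightarrow> R y z \<longrightarrow> R x z) \<and>
     (\<forall>x\<in>{a..b}. closed {y \<in> {a..b}. R y x} \<and> closed {y \<in> {a..b}. R x y}) \<and>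
     (\<exists>!t. is_best_in R {a..b} t)"

definition top :: "real \<Rightarrow> real \<Rightarrow> pref \<Rightarrow> real" where
  "top a b R = (THE t. is_best_in R {a..b} t)"

definition is_profile :: "real \<Rightarrow> real \<Rightarrow> nat \<Rightarrow> profile \<Rightarrow> bool" where
  "is_profile a b n R \<longleftrightarrow> (\<forall>i\<in>{1..n}. in_U a b (R i))"

definition med :: "real list \<Rightarrow> real" where
  "med xs = sort xs ! (length xs div 2)"

definition mvs :: "real \<Rightarrow> real \<Rightarrow> nat \<Rightarrow> (nat \<Rightarrow> real) \<Rightarrow> profile \<Rightarrow> real" where
  "mvs a b n \<alpha> R = med (map (\<lambda>i. top a b (R i)) [1..<n+1] @ map \<alpha> [1..<n])"

definition ballots_ok :: "real \<Rightarrow> real \<Rightarrow> nat \<Rightarrow> (nat \<Rightarrow> real) \<Rightarrow> bool" where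
  "ballots_ok a b n \<alpha> \<longleftrightarrow> (\<forall>k\<in>{1..<n}. \<alpha> k \<in> {a..b}) \<and>
      (\<forall>k\<in>{1..<n}. \<forall>l\<in>{1..<n}. k \<le> l \<longrightarrow> \<alpha> k \<le> \<alpha> l)"

definition monotone_family :: "real \<Rightarrow> real \<Rightarrow> nat \<Rightarrow> (nat set \<Rightarrow> real) \<Rightarrow> bool" where
  "monotone_family a b n p \<longleftrightarrow>
     (\<forall>S. S \<subseteq> {1..n} \<longrightarrow> p S \<in> {a..b}) \<and> p {1..n} = a \<and> p {} = b \<and>
     (\<forall>Q T. Q \<subseteq> {1..n} \<longrightarrow> T \<subseteq> Q \<longrightarrow> p Q \<le> p T)"

definition gmvs :: "real \<Rightarrow> real \<Rightarrow> nat \<Rightarrow> (nat set \<Rightarrow> real) \<Rightarrow> profile \<Rightarrow> real" where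
  "gmvs a b n p R = Min {Max (insert (p S) ((\<lambda>j. top a b (R j)) ` S)) | S. S \<subseteq> {1..n}}"

definition dictatorial :: "real \<Rightarrow> real \<Rightarrow> nat \<Rightarrow> (profile \<Rightarrow> real) \<Rightarrow> bool" where
  "dictatorial a b n f \<longleftrightarrow>
     (\<exists>i\<in>{1..n}. \<forall>R. is_profile a b n R \<longrightarrow> f R = top a b (R i))"

definition option_set :: "real \<Rightarrow> real \<Rightarrow> nat \<Rightarrow> (profile \<Rightarrow> real) \<Rightarrow> nat \<Rightarrow> pref \<Rightarrow> real set" where
  "option_set a b n f i Ri = {f (R(i := Ri)) | R. is_profile a b n R}"

definition manipulation :: "real \<Rightarrow> real \<Rightarrow> nat \<Rightarrow> (profile \<Rightarrow> real) \<Rightarrow> nat \<Rightarrow> pref \<Rightarrow> pref \<Rightarrow> bool" where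
  "manipulation a b n f i Ri Ri' \<longleftrightarrow>
     (\<exists>R. is_profile a b n R \<and> strict Ri (f (R(i := Ri'))) (f (R(i := Ri))))"

definition obvious_manipulation :: "real \<Rightarrow> real \<Rightarrow> nat \<Rightarrow> (profile \<Rightarrow> real) \<Rightarrow> nat \<Rightarrow> pref \<Rightarrow> pref \<Rightarrow> bool" where
  "obvious_manipulation a b n f i Ri Ri' \<longleftrightarrow>
     manipulation a b n f i Ri Ri' \<and>
     ((\<exists>w' w. is_worst_in Ri (option_set a b n f i Ri') w' \<and>
              is_worst_in Ri (option_set a b n f i Ri) w \<and> strict Ri w' w) \<or>
      (\<exists>v' v. is_best_in Ri (option_set a b n f i Ri') v' \<and>
              is_best_in Ri (option_set a b n f i Ri) v \<and> strict Ri v' v))"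

definition NOM :: "real \<Rightarrow> real \<Rightarrow> nat \<Rightarrow> (profile \<Rightarrow> real) \<Rightarrow> bool" where
  "NOM a b n f \<longleftrightarrow>
     \<not> (\<exists>i\<in>{1..n}. \<exists>Ri Ri'. in_U a b Ri \<and> in_U a b Ri' \<and> obvious_manipulation a b n f i Ri Ri')"

end

theory Submission
  imports Defs
begin

definition pref_of :: "real \<Rightarrow> real \<Rightarrow> (real \<Rightarrow> real) \<Rightarrow> pref" where
  "pref_of a b u = (\<lambda>x y. x \<in> {a..b} \<and> y \<in> {a..b} \<and> u y \<le> u x)"

lemma closed_sup_set:
  assumes "continuous_on {a..b::real} u"
  shows "closed {y \<in> {a..b}. (c::real) \<le> u y}" "closed {y \<in> {a..b}. u y \<le> (c::real)}"
proof -
  have "{y \<in> {a..b}. c \<le> u y} = {a..b} \<inter> u -` {c..}" by auto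
  then show "closed {y \<in> {a..b}. c \<le> u y}"
    using continuous_closed_preimage[OF assms closed_atLeastAtMost closed_atLeast] by auto
  have "{y \<in> {a..b}. u y \<le> c} = {a..b} \<inter> u -` {..c}" by auto
  then show "closed {y \<in> {a..b}. u y \<le> c}"
    using continuous_closed_preimage[OF assms closed_atLeastAtMost closed_atMost] by auto
qed

lemma pref_of_U:
  assumes cont: "continuous_on {a..b} u" and t: "t \<in> {a..b}"
    and mx: "\<forall>x\<in>{a..b}. x \<noteq> t \<longrightarrow> u x < u t"
  shows "in_U a b (pref_of a b u)" "top a b (pref_of a b u) = t"
proof -
  have best: "is_best_in (pref_of a b u) {a..b} t"
    using t mx unfolding is_best_in_def pref_of_def by force
  have uniq: "\<And>s. is_best_in (pref_of a b u) {a..b} s \<Longrightarrow> s = t"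
  proof (rule ccontr)
    fix s assume "is_best_in (pref_of a b u) {a..b} s" "s \<noteq> t"
    then have "s \<in> {a..b}" "u t \<le> u s" using t unfolding is_best_in_def pref_of_def by auto
    with mx \<open>s \<noteq> t\<close> show False by force
  qed
  have cl: "\<forall>x\<in>{a..b}. closed {y \<in> {a..b}. pref_of a b u y x} \<and> closed {y \<in> {a..b}. pref_of a b u x y}"
  proof
    fix x assume x: "x \<in> {a..b}"
    have "{y \<in> {a..b}. pref_of a b u y x} = {y \<in> {a..b}. u x \<le> u y}"
      using x unfolding pref_of_def by auto
    moreover have "{y \<in> {a..b}. pref_of a b u x y} = {y \<in> {a..b}. u y \<le> u x}"
      using x unfolding pref_of_def by auto
    ultimately show "closed {y \<in> {a..b}. pref_of a b u y x} \<and> closed {y \<in> {a..b}. pref_of a b u x y}"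
      using closed_sup_set[OF cont] by simp
  qed
  show "in_U a b (pref_of a b u)"
    unfolding in_U_def
    apply (intro conjI)
        apply (simp add: pref_of_def)
       apply (auto simp: pref_of_def)[1]
      apply (auto simp: pref_of_def)[1]
     apply (rule cl)
    using best uniq by blast
  show "top a b (pref_of a b u) = t"
    unfolding top_def using best uniq by (rule the_equality)
qed

definition pk :: "real \<Rightarrow> real \<Rightarrow> real \<Rightarrow> pref" where
  "pk a b t = pref_of a b (\<lambda>x. - \<bar>x - t\<bar>)"

lemma pk_U:
  assumes "t \<in> {a..b}"
  shows "in_U a b (pk a b t)" "top a b (pk a b t) = t"
proof -
  have c: "continuous_on {a..b} (\<lambda>x. - \<bar>x - t\<bar>)" by (intro continuous_intros)
  have m: "\<forall>x\<in>{a..b}. x \<noteq> t \<longrightarrow> - \<bar>x - t\<bar> < - \<bar>t - t\<bar>" by auto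
  show "in_U a b (pk a b t)" "top a b (pk a b t) = t"
    unfolding pk_def using pref_of_U[OF c assms m] by auto
qed

lemma top_in:
  assumes "in_U a b R"
  shows "top a b R \<in> {a..b}" "is_best_in R {a..b} (top a b R)"
proof -
  have "\<exists>!t. is_best_in R {a..b} t" using assms unfolding in_U_def by blast
  then have "is_best_in R {a..b} (THE t. is_best_in R {a..b} t)" by (rule theI')
  then show "is_best_in R {a..b} (top a b R)" unfolding top_def .
  then show "top a b R \<in> {a..b}" unfolding is_best_in_def by auto
qed


definition gv :: "real \<Rightarrow> real \<Rightarrow> real \<Rightarrow> real \<Rightarrow> real \<Rightarrow> real" where
  "gv b c d x y = min b (min (max y c) (min (max x y) (max x d)))"

locale absF =
  fixes a b :: real and n :: nat and F :: "(nat \<Rightarrow> real) \<Rightarrow> real" and C D :: "nat \<Rightarrow> real"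
  assumes ab: "a < b" and n2: "n \<ge> 2"
    and monoF: "\<And>s t. (\<And>j. j \<in> {1..n} \<Longrightarrow> a \<le> s j \<and> s j \<le> t j \<and> t j \<le> b) \<Longrightarrow> F s \<le> F t"
    and gform: "\<And>i x y. i \<in> {1..n} \<Longrightarrow> x \<in> {a..b} \<Longrightarrow> y \<in> {a..b} \<Longrightarrow>
                  F ((\<lambda>j. y)(i := x)) = gv b (C i) (D i) x y"
    and CD: "\<And>i. i \<in> {1..n} \<Longrightarrow> C i \<in> {a..b} \<and> D i \<in> {a..b}"
begin

abbreviation ff :: "profile \<Rightarrow> real" where
  "ff \<equiv> (\<lambda>R. F (\<lambda>j. top a b (R j)))"

lemma prof_const: "y \<in> {a..b} \<Longrightarrow> is_profile a b n (\<lambda>j. pk a b y)"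
  unfolding is_profile_def using pk_U by auto

lemma tops_upd: "y \<in> {a..b} \<Longrightarrow> (\<lambda>j. top a b (((\<lambda>j. pk a b y)(i := Ri)) j)) = (\<lambda>j. y)(i := top a b Ri)"
  using pk_U by (auto simp: fun_eq_iff)

lemma prof_upd: "is_profile a b n R \<Longrightarrow> in_U a b Ri \<Longrightarrow> is_profile a b n (R(i := Ri))"
  unfolding is_profile_def by auto

lemma bounds:
  assumes R: "is_profile a b n R" and Ri: "in_U a b Ri" and i: "i \<in> {1..n}"
  shows "gv b (C i) (D i) (top a b Ri) a \<le> ff (R(i := Ri))"
        "ff (R(i := Ri)) \<le> gv b (C i) (D i) (top a b Ri) b"
proof -
  have x: "top a b Ri \<in> {a..b}" using top_in[OF Ri] by auto
  have tj: "\<And>j. j \<in> {1..n} \<Longrightarrow> top a b (R j) \<in> {a..b}"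
    using R top_in unfolding is_profile_def by auto
  have "F ((\<lambda>j. a)(i := top a b Ri)) \<le> ff (R(i := Ri))"
    by (rule monoF) (use x tj in auto)
  then show "gv b (C i) (D i) (top a b Ri) a \<le> ff (R(i := Ri))"
    using gform[OF i x] ab by auto
  have "ff (R(i := Ri)) \<le> F ((\<lambda>j. b)(i := top a b Ri))"
    by (rule monoF) (use x tj in auto)
  then show "ff (R(i := Ri)) \<le> gv b (C i) (D i) (top a b Ri) b"
    using gform[OF i x] ab by auto
qed

lemma opt_bounds:
  assumes "z \<in> option_set a b n ff i Ri" "in_U a b Ri" "i \<in> {1..n}"
  shows "gv b (C i) (D i) (top a b Ri) a \<le> z" "z \<le> gv b (C i) (D i) (top a b Ri) b"
  using assms bounds unfolding option_set_def by auto

lemma opt_mem: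
  assumes "y \<in> {a..b}" "in_U a b Ri" "i \<in> {1..n}"
  shows "gv b (C i) (D i) (top a b Ri) y \<in> option_set a b n ff i Ri"
  and "ff ((\<lambda>j. pk a b y)(i := Ri)) = gv b (C i) (D i) (top a b Ri) y"
proof -
  show "ff ((\<lambda>j. pk a b y)(i := Ri)) = gv b (C i) (D i) (top a b Ri) y"
  proof -
    have "ff ((\<lambda>j. pk a b y)(i := Ri)) = F ((\<lambda>j. y)(i := top a b Ri))"
      by (simp only: tops_upd[OF assms(1)])
    then show ?thesis using gform[OF assms(3) top_in(1)[OF assms(2)] assms(1)] by simp
  qed
  then show "gv b (C i) (D i) (top a b Ri) y \<in> option_set a b n ff i Ri"
    unfolding option_set_def using prof_const[OF assms(1)] by force
qed

lemma suff:
  assumes "\<forall>i\<in>{1..n}. C i = a \<and> D i = b"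
  shows "NOM a b n ff"
proof -
  have O: "option_set a b n ff i Ri = {a..b}" if i: "i \<in> {1..n}" and Ri: "in_U a b Ri" for i Ri
  proof
    have x: "top a b Ri \<in> {a..b}" using top_in[OF Ri] by auto
    show "option_set a b n ff i Ri \<subseteq> {a..b}"
    proof
      fix z assume z: "z \<in> option_set a b n ff i Ri"
      show "z \<in> {a..b}"
        using opt_bounds[OF z Ri i] assms i x ab unfolding gv_def by (auto simp: min_def max_def)
    qed
    show "{a..b} \<subseteq> option_set a b n ff i Ri"
    proof
      fix y assume y: "y \<in> {a..b}"
      have "gv b (C i) (D i) (top a b Ri) y = y"
        using assms i x y unfolding gv_def by (auto simp: min_def max_def)
      then show "y \<in> option_set a b n ff i Ri" using opt_mem(1)[OF y Ri i] by simp
    qed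
  qed
  show ?thesis
    unfolding NOM_def
  proof
    assume "\<exists>i\<in>{1..n}. \<exists>Ri Ri'. in_U a b Ri \<and> in_U a b Ri' \<and> obvious_manipulation a b n ff i Ri Ri'"
    then obtain i Ri Ri' where i: "i \<in> {1..n}" and U: "in_U a b Ri" "in_U a b Ri'"
      and om: "obvious_manipulation a b n ff i Ri Ri'" by blast
    have eq: "option_set a b n ff i Ri' = option_set a b n ff i Ri" using O[OF i U(1)] O[OF i U(2)] by simp
    show False using om unfolding obvious_manipulation_def eq is_worst_in_def is_best_in_def strict_def
      by blast
  qed
qed

lemma dict:
  assumes i: "i \<in> {1..n}" and cd: "C i = b" "D i = a"
  shows "dictatorial a b n ff"
  unfolding dictatorial_def
proof (intro bexI[OF _ i] allI impI)
  fix R assume R: "is_profile a b n R"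
  have Ri: "in_U a b (R i)" using R i unfolding is_profile_def by auto
  have x: "top a b (R i) \<in> {a..b}" using top_in[OF Ri] by auto
  have e: "R(i := R i) = R" by simp
  have g1: "gv b (C i) (D i) (top a b (R i)) a = top a b (R i)"
    using x ab unfolding gv_def cd by (auto simp: min_def max_def)
  have g2: "gv b (C i) (D i) (top a b (R i)) b = top a b (R i)"
    using x ab unfolding gv_def cd by (auto simp: min_def max_def)
  show "ff R = top a b (R i)"
    using bounds[OF R Ri i] unfolding e g1 g2 by linarith
qed

lemma caseA:
  assumes i: "i \<in> {1..n}" and c: "C i > a" and d: "D i > a"
  shows "\<exists>Ri Ri'. in_U a b Ri \<and> in_U a b Ri' \<and> obvious_manipulation a b n ff i Ri Ri'"
proof -
  define c where "c = C i"
  define d where "d = D i"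
  have cab: "c \<in> {a..b}" "d \<in> {a..b}" using CD[OF i] unfolding c_def d_def by auto
  define m where "m = (a + min c d) / 2"
  define k where "k = (m - a) / (2 * (b - a))"
  define u where "u = (\<lambda>x. max (m - x) (k * (x - m)))"
  have am: "a < m" "m < c" "m < d" "m < b" using c d cab unfolding m_def c_def d_def by auto
  have k0: "k > 0" unfolding k_def using am ab by auto
  have kb: "k * (b - a) = (m - a) / 2" unfolding k_def using ab by (simp add: field_simps)
  have ucont: "continuous_on {a..b} u" unfolding u_def by (intro continuous_intros)
  have "k * (a - m) < 0" using k0 am by (simp add: mult_pos_neg)
  then have ua: "u a = m - a" unfolding u_def using am by (auto simp: max_def)
  have umax: "\<forall>x\<in>{a..b}. x \<noteq> a \<longrightarrow> u x < u a"
  proof (intro ballI impI)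
    fix x assume x: "x \<in> {a..b}" "x \<noteq> a"
    have "k * (x - m) \<le> k * (b - a)" using x am k0 by (intro mult_left_mono) auto
    then show "u x < u a" unfolding ua unfolding u_def using x kb am by auto
  qed
  define Ri where "Ri = pref_of a b u"
  define Ri' where "Ri' = pk a b c"
  have Ri: "in_U a b Ri" "top a b Ri = a" unfolding Ri_def using pref_of_U[OF ucont _ umax] ab by auto
  have Ri': "in_U a b Ri'" "top a b Ri' = c" unfolding Ri'_def using pk_U cab by auto
  have mab: "m \<in> {a..b}" using am by auto
  have um: "u m = 0" unfolding u_def by simp
  have "k * (c - m) > 0" using k0 am by simp
  then have uc: "u c = k * (c - m)" unfolding u_def using am by (auto simp: max_def)
  have ucpos: "u c > 0" unfolding uc using k0 am by auto
  have strict_cm: "strict Ri c m"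
    unfolding strict_def Ri_def pref_of_def using cab mab um ucpos by auto
  have v1: "gv b (C i) (D i) c m = c" unfolding gv_def c_def[symmetric] d_def[symmetric]
    using am cab by (auto simp: min_def max_def)
  have v2: "gv b (C i) (D i) a m = m" unfolding gv_def c_def[symmetric] d_def[symmetric]
    using am cab by (auto simp: min_def max_def)
  have v3: "gv b (C i) (D i) c a = c" unfolding gv_def c_def[symmetric] d_def[symmetric]
    using am cab by (auto simp: min_def max_def)
  have v4: "gv b (C i) (D i) a a = a" unfolding gv_def c_def[symmetric] d_def[symmetric]
    using am cab by (auto simp: min_def max_def)
  have v5: "gv b (C i) (D i) x b \<le> b" for x unfolding gv_def by simp
  have manip: "manipulation a b n ff i Ri Ri'"
    unfolding manipulation_def
    using prof_const[OF mab] opt_mem(2)[OF mab Ri(1) i] opt_mem(2)[OF mab Ri'(1) i] Ri Ri' v1 v2 strict_cm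
    by auto
  have w1: "is_worst_in Ri (option_set a b n ff i Ri') c"
    unfolding is_worst_in_def
  proof
    show "c \<in> option_set a b n ff i Ri'"
      using opt_mem(1)[of a Ri' i] ab Ri' i v3 by auto
    show "\<forall>z\<in>option_set a b n ff i Ri'. Ri z c"
    proof
      fix z assume z: "z \<in> option_set a b n ff i Ri'"
      have zb: "c \<le> z" "z \<le> b" using opt_bounds[OF z Ri'(1) i] v3 v5[of c] unfolding Ri'(2) by auto
      have "k * (c - m) \<le> k * (z - m)" using zb k0 by (intro mult_left_mono) auto
      then have "u c \<le> u z" unfolding uc unfolding u_def by auto
      then show "Ri z c" unfolding Ri_def pref_of_def using zb cab by auto
    qed
  qed
  have w2: "is_worst_in Ri (option_set a b n ff i Ri) m"
    unfolding is_worst_in_def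
  proof
    show "m \<in> option_set a b n ff i Ri"
      using opt_mem(1)[OF mab Ri(1) i] Ri v2 by auto
    show "\<forall>z\<in>option_set a b n ff i Ri. Ri z m"
    proof
      fix z assume z: "z \<in> option_set a b n ff i Ri"
      have zb: "a \<le> z" "z \<le> b" using opt_bounds[OF z Ri(1) i] v4 v5[of a] unfolding Ri(2) by auto
      have "0 \<le> u z"
      proof (cases "z \<le> m")
        case False
        then have "0 \<le> k * (z - m)" using k0 by simp
        then show ?thesis unfolding u_def by linarith
      qed (auto simp: u_def)
      then show "Ri z m" unfolding Ri_def pref_of_def using zb mab um by auto
    qed
  qed
  have "obvious_manipulation a b n ff i Ri Ri'"
    unfolding obvious_manipulation_def using manip w1 w2 strict_cm by blast
  then show ?thesis using Ri Ri' by blast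
qed

lemma caseC:
  assumes i: "i \<in> {1..n}" and c: "C i < b" and d: "D i < b"
  shows "\<exists>Ri Ri'. in_U a b Ri \<and> in_U a b Ri' \<and> obvious_manipulation a b n ff i Ri Ri'"
proof -
  define c where "c = C i"
  define d where "d = D i"
  have cab: "c \<in> {a..b}" "d \<in> {a..b}" using CD[OF i] unfolding c_def d_def by auto
  define m where "m = (b + max c d) / 2"
  define k where "k = (b - m) / (2 * (b - a))"
  define u where "u = (\<lambda>x. max (k * (m - x)) (x - m))"
  have am: "m < b" "c < m" "d < m" "a < m" using c d cab unfolding m_def c_def d_def by auto
  have k0: "k > 0" unfolding k_def using am ab by auto
  have kb: "k * (b - a) = (b - m) / 2" unfolding k_def using ab by (simp add: field_simps)
  have ucont: "continuous_on {a..b} u" unfolding u_def by (intro continuous_intros)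
  have "k * (m - b) < 0" using k0 am by (simp add: mult_pos_neg)
  then have ub: "u b = b - m" unfolding u_def using am by (auto simp: max_def)
  have umax: "\<forall>x\<in>{a..b}. x \<noteq> b \<longrightarrow> u x < u b"
  proof (intro ballI impI)
    fix x assume x: "x \<in> {a..b}" "x \<noteq> b"
    have "k * (m - x) \<le> k * (b - a)" using x am k0 by (intro mult_left_mono) auto
    then show "u x < u b" unfolding ub unfolding u_def using x kb am by auto
  qed
  define Ri where "Ri = pref_of a b u"
  define Ri' where "Ri' = pk a b d"
  have Ri: "in_U a b Ri" "top a b Ri = b" unfolding Ri_def using pref_of_U[OF ucont _ umax] ab by auto
  have Ri': "in_U a b Ri'" "top a b Ri' = d" unfolding Ri'_def using pk_U cab by auto
  have mab: "m \<in> {a..b}" using am by auto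
  have um: "u m = 0" unfolding u_def by simp
  have "k * (m - d) > 0" using k0 am by simp
  then have ud: "u d = k * (m - d)" unfolding u_def using am by (auto simp: max_def)
  have udpos: "u d > 0" unfolding ud using k0 am by auto
  have strict_dm: "strict Ri d m"
    unfolding strict_def Ri_def pref_of_def using cab mab um udpos by auto
  have v1: "gv b (C i) (D i) d m = d" unfolding gv_def c_def[symmetric] d_def[symmetric]
    using am cab by (auto simp: min_def max_def)
  have v2: "gv b (C i) (D i) b m = m" unfolding gv_def c_def[symmetric] d_def[symmetric]
    using am cab by (auto simp: min_def max_def)
  have v3: "gv b (C i) (D i) d b = d" unfolding gv_def c_def[symmetric] d_def[symmetric]
    using am cab by (auto simp: min_def max_def)
  have v6: "a \<le> gv b (C i) (D i) x a" if "a \<le> x" for x unfolding gv_def c_def[symmetric] d_def[symmetric]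
    using am cab ab that by (auto simp: min_def max_def)
  have v5: "gv b (C i) (D i) x b \<le> b" for x unfolding gv_def by simp
  have manip: "manipulation a b n ff i Ri Ri'"
    unfolding manipulation_def
    using prof_const[OF mab] opt_mem(2)[OF mab Ri(1) i] opt_mem(2)[OF mab Ri'(1) i] Ri Ri' v1 v2 strict_dm
    by auto
  have w1: "is_worst_in Ri (option_set a b n ff i Ri') d"
    unfolding is_worst_in_def
  proof
    show "d \<in> option_set a b n ff i Ri'"
      using opt_mem(1)[of b Ri' i] ab Ri' i v3 by auto
    show "\<forall>z\<in>option_set a b n ff i Ri'. Ri z d"
    proof
      fix z assume z: "z \<in> option_set a b n ff i Ri'"
      have zb: "a \<le> z" "z \<le> d" using opt_bounds[OF z Ri'(1) i] v3 v6[of d] cab unfolding Ri'(2) by auto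
      have "k * (m - d) \<le> k * (m - z)" using zb k0 by (intro mult_left_mono) auto
      then have "u d \<le> u z" unfolding ud unfolding u_def by auto
      then show "Ri z d" unfolding Ri_def pref_of_def using zb cab by auto
    qed
  qed
  have w2: "is_worst_in Ri (option_set a b n ff i Ri) m"
    unfolding is_worst_in_def
  proof
    show "m \<in> option_set a b n ff i Ri"
      using opt_mem(1)[OF mab Ri(1) i] Ri v2 by auto
    show "\<forall>z\<in>option_set a b n ff i Ri. Ri z m"
    proof
      fix z assume z: "z \<in> option_set a b n ff i Ri"
      have zb: "a \<le> z" "z \<le> b" using opt_bounds[OF z Ri(1) i] v6[of b] v5[of b] ab unfolding Ri(2) by auto
      have "0 \<le> u z"
      proof (cases "m \<le> z")
        case False
        then have "0 \<le> k * (m - z)" using k0 by simp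
        then show ?thesis unfolding u_def by linarith
      qed (auto simp: u_def)
      then show "Ri z m" unfolding Ri_def pref_of_def using zb mab um by auto
    qed
  qed
  have "obvious_manipulation a b n ff i Ri Ri'"
    unfolding obvious_manipulation_def using manip w1 w2 strict_dm by blast
  then show ?thesis using Ri Ri' by blast
qed

lemma nom_iff:
  assumes nd: "\<forall>i\<in>{1..n}. \<not> (C i = b \<and> D i = a)"
  shows "NOM a b n ff \<longleftrightarrow> (\<forall>i\<in>{1..n}. C i = a \<and> D i = b)"
proof
  assume N: "NOM a b n ff"
  show "\<forall>i\<in>{1..n}. C i = a \<and> D i = b"
  proof (rule ballI, rule ccontr)
    fix i assume i: "i \<in> {1..n}" and ne: "\<not> (C i = a \<and> D i = b)"
    have cd: "C i \<in> {a..b}" "D i \<in> {a..b}" using CD[OF i] by auto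
    have "\<exists>Ri Ri'. in_U a b Ri \<and> in_U a b Ri' \<and> obvious_manipulation a b n ff i Ri Ri'"
    proof (cases "C i > a \<and> D i > a")
      case True then show ?thesis using caseA[OF i] by blast
    next
      case False
      then have "C i < b \<and> D i < b" using nd i ne cd ab by force
      then show ?thesis using caseC[OF i] by blast
    qed
    then show False using N i unfolding NOM_def by blast
  qed
next
  assume "\<forall>i\<in>{1..n}. C i = a \<and> D i = b"
  then show "NOM a b n ff" by (rule suff)
qed

end


definition Fg :: "nat \<Rightarrow> (nat set \<Rightarrow> real) \<Rightarrow> (nat \<Rightarrow> real) \<Rightarrow> real" where
  "Fg n p t = Min {Max (insert (p S) (t ` S)) | S. S \<subseteq> {1..n}}"

lemma Fg_set: "{Max (insert (p S) (t ` S)) | S. S \<subseteq> {1..n}} = (\<lambda>S. Max (insert (p S) (t ` S))) ` Pow {1..n}"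
  by auto

lemma Fg_fin: "finite {Max (insert (p S) (t ` S)) | S. S \<subseteq> {1..n::nat}}"
  "{Max (insert (p S) (t ` S)) | S. S \<subseteq> {1..n::nat}} \<noteq> {}"
  unfolding Fg_set by auto


lemma Fg_le: "S \<subseteq> {1..n} \<Longrightarrow> Fg n p t \<le> Max (insert (p S) (t ` S))"
  unfolding Fg_def by (rule Min_le[OF Fg_fin(1)]) auto

lemma Fg_attained: "\<exists>S. S \<subseteq> {1..n} \<and> Fg n p t = Max (insert (p S) (t ` S))"
proof -
  have "Fg n p t \<in> {Max (insert (p S) (t ` S)) | S. S \<subseteq> {1..n}}"
    unfolding Fg_def by (rule Min_in[OF Fg_fin])
  then show ?thesis by auto
qed


lemma Max_ins_mono:
  assumes "S \<subseteq> {1..n::nat}" "\<And>j. j \<in> {1..n} \<Longrightarrow> s j \<le> (t j::real)"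
  shows "Max (insert q (s ` S)) \<le> Max (insert q (t ` S))"
proof -
  have fin: "finite S" using assms(1) finite_subset by blast
  have fin2: "finite (insert q (t ` S))" using fin by simp
  show ?thesis
  proof (rule Max.boundedI)
    show "finite (insert q (s ` S))" using fin by simp
    show "insert q (s ` S) \<noteq> {}" by simp
    fix z assume "z \<in> insert q (s ` S)"
    then show "z \<le> Max (insert q (t ` S))"
    proof
      assume "z = q" then show ?thesis using Max_ge[OF fin2, of q] by simp
    next
      assume "z \<in> s ` S"
      then obtain j where j: "j \<in> S" "z = s j" by auto
      then have "z \<le> t j" using assms by auto
      also have "t j \<le> Max (insert q (t ` S))" using j by (intro Max_ge[OF fin2]) auto
      finally show ?thesis .
    qed
  qed
qed

lemma min4_in: "min (w::real) (min x (min y z)) \<in> {w, x, y, z}"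
  by (simp add: min_def)

lemma gmvs_absF:
  assumes ab: "a < b" and n2: "n \<ge> 2" and mf: "monotone_family a b n p"
  shows "absF a b n (Fg n p) (\<lambda>i. p ({1..n} - {i})) (\<lambda>i. p {i})"
proof
  show "a < b" "2 \<le> n" by fact+
  have pab: "\<And>S. S \<subseteq> {1..n} \<Longrightarrow> p S \<in> {a..b}" and pN: "p {1..n} = a" and p0: "p {} = b"
    and pm: "\<And>Q T. Q \<subseteq> {1..n} \<Longrightarrow> T \<subseteq> Q \<Longrightarrow> p Q \<le> p T"
    using mf unfolding monotone_family_def by auto
  show "\<And>i. i \<in> {1..n} \<Longrightarrow> p ({1..n} - {i}) \<in> {a..b} \<and> p {i} \<in> {a..b}"
    using pab by auto
  show "Fg n p s \<le> Fg n p t" if h: "\<And>j. j \<in> {1..n} \<Longrightarrow> a \<le> s j \<and> s j \<le> t j \<and> t j \<le> b" for s t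
  proof -
    obtain S where S: "S \<subseteq> {1..n}" "Fg n p t = Max (insert (p S) (t ` S))" using Fg_attained by blast
    have "Fg n p s \<le> Max (insert (p S) (s ` S))" by (rule Fg_le[OF S(1)])
    also have "\<dots> \<le> Max (insert (p S) (t ` S))" by (rule Max_ins_mono[OF S(1)]) (use h in auto)
    finally show ?thesis using S by simp
  qed
  show "Fg n p ((\<lambda>j. y)(i := x)) = gv b (p ({1..n} - {i})) (p {i}) x y"
    if i: "i \<in> {1..n}" and x: "x \<in> {a..b}" and y: "y \<in> {a..b}" for i x y
  proof -
    define v where "v = (\<lambda>j::nat. y)(i := x)"
    define c where "c = p ({1..n} - {i})"
    define d where "d = p {i}"
    define val where "val = (\<lambda>S. Max (insert (p S) (v ` S)))"
    obtain j where j: "j \<in> {1..n}" "j \<noteq> i"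
    proof (cases "i = 1")
      case True then show ?thesis using that[of 2] n2 by auto
    next
      case False then show ?thesis using that[of 1] n2 by auto
    qed
    have cab: "c \<in> {a..b}" "d \<in> {a..b}" unfolding c_def d_def using pab i by auto
    have g1: "gv b c d x y \<le> b" and g2: "gv b c d x y \<le> max y c"
      and g3: "gv b c d x y \<le> max x y" and g4: "gv b c d x y \<le> max x d"
      unfolding gv_def by auto
    have lower: "gv b c d x y \<le> val S" if S: "S \<subseteq> {1..n}" for S
    proof -
      have fin: "finite S" using S finite_subset by blast
      have pS: "p S \<le> val S" unfolding val_def using fin by (simp add: Max_ge_iff)
      have vS: "k \<in> S \<Longrightarrow> v k \<le> val S" for k unfolding val_def using fin by (intro Max_ge) auto
      show ?thesis
      proof (cases "i \<in> S")
        case False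
        show ?thesis
        proof (cases "S = {}")
          case True then show ?thesis using pS p0 g1 by simp
        next
          case False
          then obtain k where k: "k \<in> S" by auto
          have "k \<noteq> i" using k \<open>i \<notin> S\<close> by auto
          then have "y \<le> val S" using vS[OF k] unfolding v_def by simp
          moreover have "c \<le> p S" unfolding c_def using S \<open>i \<notin> S\<close> by (intro pm) auto
          ultimately have "max y c \<le> val S" using pS by simp
          then show ?thesis using g2 by linarith
        qed
      next
        case True
        then have xS: "x \<le> val S" using vS[of i] unfolding v_def by simp
        show ?thesis
        proof (cases "S = {i}")
          case True
          then have "max x d \<le> val S" using pS xS unfolding d_def by simp
          then show ?thesis using g4 by linarith
        next
          case False
          then obtain k where k: "k \<in> S" "k \<noteq> i" using \<open>i \<in> S\<close> by auto
          then have "y \<le> val S" using vS[OF k(1)] unfolding v_def by simp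
          then have "max x y \<le> val S" using xS by simp
          then show ?thesis using g3 by linarith
        qed
      qed
    qed
    have e1: "val {} = b" unfolding val_def using p0 by simp
    have "v ` ({1..n} - {i}) = {y}" unfolding v_def using j by auto
    then have e2: "val ({1..n} - {i}) = max y c" unfolding val_def c_def by (simp add: max.commute)
    have "v ` {1..n} = {x, y}" unfolding v_def using j i by auto
    then have "val {1..n} = max a (max x y)" unfolding val_def using pN by simp
    moreover have "max a (max x y) = max x y" using x by (simp add: max_def)
    ultimately have e3: "val {1..n} = max x y" by simp
    have e4: "val {i} = max x d" unfolding val_def d_def v_def by (simp add: max.commute)
    have mem: "gv b c d x y \<in> {val S | S. S \<subseteq> {1..n}}"
    proof -
      have "gv b c d x y \<in> {val {}, val ({1..n} - {i}), val {1..n}, val {i}}"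
        unfolding e1 e2 e3 e4 gv_def by (rule min4_in)
      then show ?thesis using i by blast
    qed
    have "Fg n p v = gv b c d x y"
      unfolding Fg_def
    proof (rule Min_eqI)
      show "finite {Max (insert (p S) (v ` S)) |S. S \<subseteq> {1..n}}" by (rule Fg_fin)
      show "gv b c d x y \<in> {Max (insert (p S) (v ` S)) |S. S \<subseteq> {1..n}}" using mem unfolding val_def .
      show "\<And>z. z \<in> {Max (insert (p S) (v ` S)) |S. S \<subseteq> {1..n}} \<Longrightarrow> gv b c d x y \<le> z"
        using lower unfolding val_def by blast
    qed
    then show ?thesis unfolding v_def c_def d_def .
  qed
qed


lemma len_filter_sort: "length (filter P (sort L)) = length (filter P (L::real list))"
  by (simp add: filter_sort)

lemma sort_nth_counts:
  assumes k: "k < length (L::real list)"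
  shows "length (filter (\<lambda>x. x < sort L ! k) L) \<le> k"
    "k + 1 \<le> length (filter (\<lambda>x. x \<le> sort L ! k) L)"
    "sort L ! k \<in> set L"
proof -
  define s where "s = sort L"
  have ss: "sorted s" and ls: "length s = length L" unfolding s_def by auto
  have "{j. j < length s \<and> s ! j < s ! k} \<subseteq> {0..<k}"
  proof
    fix j assume j: "j \<in> {j. j < length s \<and> s ! j < s ! k}"
    show "j \<in> {0..<k}"
    proof (rule ccontr)
      assume "j \<notin> {0..<k}"
      then have "k \<le> j" by auto
      then have "s ! k \<le> s ! j" using sorted_nth_mono[OF ss] j by auto
      then show False using j by auto
    qed
  qed
  then have "card {j. j < length s \<and> s ! j < s ! k} \<le> k"
    using card_mono[of "{0..<k}"] by fastforce
  then show "length (filter (\<lambda>x. x < sort L ! k) L) \<le> k"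
    using len_filter_sort[of "\<lambda>x. x < sort L ! k" L] unfolding s_def[symmetric] length_filter_conv_card
    by simp
  have "{0..k} \<subseteq> {j. j < length s \<and> s ! j \<le> s ! k}"
    using sorted_nth_mono[OF ss] k ls by auto
  then have "k + 1 \<le> card {j. j < length s \<and> s ! j \<le> s ! k}"
    using card_mono[of "{j. j < length s \<and> s ! j \<le> s ! k}" "{0..k}"] by fastforce
  then show "k + 1 \<le> length (filter (\<lambda>x. x \<le> sort L ! k) L)"
    using len_filter_sort[of "\<lambda>x. x \<le> sort L ! k" L] unfolding s_def[symmetric] length_filter_conv_card
    by simp
  show "sort L ! k \<in> set L" using k by (metis length_sort nth_mem set_sort)
qed

lemma len_filter_map_upt:
  "length (filter P (map t [m..<k])) = card {j \<in> {m..<k}. P (t j)}"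
proof -
  have "length (filter P (map t [m..<k])) = length (filter (P \<circ> t) [m..<k])"
    by (simp add: filter_map)
  also have "\<dots> = card ({x. (P \<circ> t) x} \<inter> set [m..<k])"
    by (rule distinct_length_filter) simp
  also have "{x. (P \<circ> t) x} \<inter> set [m..<k] = {j \<in> {m..<k}. P (t j)}" by auto
  finally show ?thesis .
qed

lemma count_split:
  "length (filter P (map t [1..<n+1] @ map (\<alpha>::nat \<Rightarrow> real) [1..<n])) =
     card {j \<in> {1..n}. P (t j)} + card {l \<in> {1..<n}. P (\<alpha> l)}"
proof -
  have "{1..<n+1} = {1..n}" by auto
  then show ?thesis using len_filter_map_upt[of P t 1 "n+1"] len_filter_map_upt[of P \<alpha> 1 n] by simp
qed


definition pal :: "real \<Rightarrow> real \<Rightarrow> nat \<Rightarrow> (nat \<Rightarrow> real) \<Rightarrow> nat set \<Rightarrow> real" where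
  "pal a b n \<alpha> S = (if card S = 0 then b else if n \<le> card S then a else \<alpha> (n - card S))"

definition Fm :: "nat \<Rightarrow> (nat \<Rightarrow> real) \<Rightarrow> (nat \<Rightarrow> real) \<Rightarrow> real" where
  "Fm n \<alpha> t = med (map t [1..<n+1] @ map \<alpha> [1..<n])"

lemma Fm_eq_Fg:
  assumes ab: "a < b" and n2: "n \<ge> 2" and bo: "ballots_ok a b n \<alpha>"
    and tab: "\<And>j. j \<in> {1..n} \<Longrightarrow> t j \<in> {a..b}"
  shows "Fm n \<alpha> t = Fg n (pal a b n \<alpha>) t"
proof -
  have aab: "\<And>l. l \<in> {1..<n} \<Longrightarrow> \<alpha> l \<in> {a..b}"
    and amono: "\<And>k l. k \<in> {1..<n} \<Longrightarrow> l \<in> {1..<n} \<Longrightarrow> k \<le> l \<Longrightarrow> \<alpha> k \<le> \<alpha> l"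
    using bo unfolding ballots_ok_def by auto
  define L where "L = map t [1..<n+1] @ map \<alpha> [1..<n]"
  have lenL: "length L = n + (n - 1)" unfolding L_def by simp
  have kk: "length L div 2 = n - 1" unfolding lenL using n2 by simp
  define v where "v = sort L ! (n - 1)"
  have Fmv: "Fm n \<alpha> t = v" unfolding Fm_def med_def L_def[symmetric] kk v_def ..
  have klt: "n - 1 < length L" unfolding lenL using n2 by simp
  have c1: "card {j \<in> {1..n}. t j < v} + card {l \<in> {1..<n}. \<alpha> l < v} \<le> n - 1"
    using sort_nth_counts(1)[OF klt] unfolding v_def L_def count_split .
  have c2: "n \<le> card {j \<in> {1..n}. t j \<le> v} + card {l \<in> {1..<n}. \<alpha> l \<le> v}"
    using sort_nth_counts(2)[OF klt] n2 unfolding v_def L_def count_split by simp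
  have "v \<in> set L" using sort_nth_counts(3)[OF klt] unfolding v_def .
  then have vab: "v \<in> {a..b}" unfolding L_def using tab aab by auto
  define val where "val = (\<lambda>S. Max (insert (pal a b n \<alpha> S) (t ` S)))"
  have one: "v \<le> val S" if S: "S \<subseteq> {1..n}" for S
  proof (rule ccontr)
    assume "\<not> v \<le> val S"
    then have lt: "val S < v" by simp
    have fin: "finite S" using S finite_subset by blast
    have pS: "pal a b n \<alpha> S < v" using lt fin unfolding val_def by (simp add: Max_gr_iff)
    have tS: "\<And>j. j \<in> S \<Longrightarrow> t j < v" using lt fin unfolding val_def by (simp add: Max_gr_iff)
    have "S \<subseteq> {j \<in> {1..n}. t j < v}" using S tS by auto
    then have cS: "card S \<le> card {j \<in> {1..n}. t j < v}" by (intro card_mono) auto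
    show False
    proof (cases "card S = 0")
      case True then show False using pS vab unfolding pal_def by simp
    next
      case False
      show False
      proof (cases "n \<le> card S")
        case True then show False using cS c1 n2 by linarith
      next
        case nle: False
        have pa: "\<alpha> (n - card S) < v" using pS False nle unfolding pal_def by simp
        have "{1..n - card S} \<subseteq> {l \<in> {1..<n}. \<alpha> l < v}"
        proof
          fix l assume l: "l \<in> {1..n - card S}"
          have "\<alpha> l \<le> \<alpha> (n - card S)" using l False nle by (intro amono) auto
          then show "l \<in> {l \<in> {1..<n}. \<alpha> l < v}" using l pa False by auto
        qed
        then have "n - card S \<le> card {l \<in> {1..<n}. \<alpha> l < v}"
          using card_mono[of "{l \<in> {1..<n}. \<alpha> l < v}" "{1..n - card S}"] by simp
        then show False using cS c1 nle by linarith
      qed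
    qed
  qed
  define S0 where "S0 = {j \<in> {1..n}. t j \<le> v}"
  have S0: "S0 \<subseteq> {1..n}" unfolding S0_def by auto
  have finS0: "finite S0" using S0 finite_subset by blast
  have cB: "card {l \<in> {1..<n}. \<alpha> l \<le> v} \<le> n - 1"
  proof -
    have "card {l \<in> {1..<n}. \<alpha> l \<le> v} \<le> card {1..<n}" by (rule card_mono) auto
    then show ?thesis by simp
  qed
  have pS0: "pal a b n \<alpha> S0 \<le> v"
  proof (cases "card S0 = 0")
    case True then show ?thesis using c2 cB n2 unfolding S0_def by linarith
  next
    case False
    show ?thesis
    proof (cases "n \<le> card S0")
      case True then show ?thesis using False vab unfolding pal_def by simp
    next
      case nle: False
      have "\<alpha> (n - card S0) \<le> v"
      proof (rule ccontr)
        assume "\<not> \<alpha> (n - card S0) \<le> v"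
        then have gt: "v < \<alpha> (n - card S0)" by simp
        have "{l \<in> {1..<n}. \<alpha> l \<le> v} \<subseteq> {1..<n - card S0}"
        proof
          fix l assume l: "l \<in> {l \<in> {1..<n}. \<alpha> l \<le> v}"
          show "l \<in> {1..<n - card S0}"
          proof (rule ccontr)
            assume "l \<notin> {1..<n - card S0}"
            then have "n - card S0 \<le> l" using l by auto
            then have "\<alpha> (n - card S0) \<le> \<alpha> l" using l False nle by (intro amono) auto
            then show False using l gt by auto
          qed
        qed
        then have "card {l \<in> {1..<n}. \<alpha> l \<le> v} \<le> n - card S0 - 1"
          using card_mono[of "{1..<n - card S0}" "{l \<in> {1..<n}. \<alpha> l \<le> v}"] by simp
        then show False using c2 nle False unfolding S0_def by linarith
      qed
      then show ?thesis using False nle unfolding pal_def by simp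
    qed
  qed
  have "val S0 \<le> v" unfolding val_def
  proof (rule Max.boundedI)
    show "finite (insert (pal a b n \<alpha> S0) (t ` S0))" using finS0 by simp
  qed (use pS0 S0_def in auto)
  then have vS0: "val S0 = v" using one[OF S0] by simp
  have "Fg n (pal a b n \<alpha>) t = v"
    unfolding Fg_def
  proof (rule Min_eqI)
    show "finite {Max (insert (pal a b n \<alpha> S) (t ` S)) |S. S \<subseteq> {1..n}}" by (rule Fg_fin)
    show "v \<in> {Max (insert (pal a b n \<alpha> S) (t ` S)) |S. S \<subseteq> {1..n}}"
      using vS0 S0 unfolding val_def by blast
    show "\<And>z. z \<in> {Max (insert (pal a b n \<alpha> S) (t ` S)) |S. S \<subseteq> {1..n}} \<Longrightarrow> v \<le> z"
      using one unfolding val_def by blast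
  qed
  then show ?thesis using Fmv by simp
qed


lemma pal_mf:
  assumes ab: "a < b" and n2: "n \<ge> 2" and bo: "ballots_ok a b n \<alpha>"
  shows "monotone_family a b n (pal a b n \<alpha>)"
proof -
  have aab: "\<And>l. l \<in> {1..<n} \<Longrightarrow> \<alpha> l \<in> {a..b}"
    and amono: "\<And>k l. k \<in> {1..<n} \<Longrightarrow> l \<in> {1..<n} \<Longrightarrow> k \<le> l \<Longrightarrow> \<alpha> k \<le> \<alpha> l"
    using bo unfolding ballots_ok_def by auto
  have r: "pal a b n \<alpha> S \<in> {a..b}" for S
    unfolding pal_def using ab aab[of "n - card S"] by auto
  have m: "pal a b n \<alpha> Q \<le> pal a b n \<alpha> T" if Q: "Q \<subseteq> {1..n}" and T: "T \<subseteq> Q" for Q T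
  proof -
    have "finite Q" using Q finite_subset by blast
    then have cTQ: "card T \<le> card Q" using T by (rule card_mono)
    show ?thesis
      unfolding pal_def using r[of Q] r[of T] cTQ
      by (auto simp: pal_def intro!: amono)
  qed
  show ?thesis unfolding monotone_family_def using r m n2 by (auto simp: pal_def)
qed

lemma mvs_absF:
  assumes ab: "a < b" and n2: "n \<ge> 2" and bo: "ballots_ok a b n \<alpha>"
  shows "absF a b n (Fm n \<alpha>) (\<lambda>i. \<alpha> 1) (\<lambda>i. \<alpha> (n - 1))"
proof -
  interpret G: absF a b n "Fg n (pal a b n \<alpha>)" "\<lambda>i. pal a b n \<alpha> ({1..n} - {i})" "\<lambda>i. pal a b n \<alpha> {i}"
    by (rule gmvs_absF[OF ab n2 pal_mf[OF ab n2 bo]])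
  have aab: "\<And>l. l \<in> {1..<n} \<Longrightarrow> \<alpha> l \<in> {a..b}"
    using bo unfolding ballots_ok_def by auto
  have p1: "pal a b n \<alpha> ({1..n} - {i}) = \<alpha> 1" if i: "i \<in> {1..n}" for i
  proof -
    have c: "card ({1..n} - {i}) = n - 1" using i by simp
    have "\<not> n \<le> n - 1" "n - (n - 1) = 1" "n - 1 \<noteq> 0" using n2 by auto
    then show ?thesis unfolding pal_def c by simp
  qed
  have p2: "pal a b n \<alpha> {i} = \<alpha> (n - 1)" for i
  proof -
    have "\<not> n \<le> 1" using n2 by auto
    then show ?thesis unfolding pal_def by simp
  qed
  show ?thesis
  proof
    show "a < b" "2 \<le> n" by fact+
    show "Fm n \<alpha> s \<le> Fm n \<alpha> t"
      if h: "\<And>j. j \<in> {1..n} \<Longrightarrow> a \<le> s j \<and> s j \<le> t j \<and> t j \<le> b" for s t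
    proof -
      have "Fm n \<alpha> s = Fg n (pal a b n \<alpha>) s"
        by (rule Fm_eq_Fg[OF ab n2 bo]) (use h in force)
      moreover have "Fm n \<alpha> t = Fg n (pal a b n \<alpha>) t"
        by (rule Fm_eq_Fg[OF ab n2 bo]) (use h in force)
      ultimately show ?thesis using G.monoF[OF h] by simp
    qed
    show "Fm n \<alpha> ((\<lambda>j. y)(i := x)) = gv b (\<alpha> 1) (\<alpha> (n - 1)) x y"
      if i: "i \<in> {1..n}" and x: "x \<in> {a..b}" and y: "y \<in> {a..b}" for i x y
    proof -
      have "Fm n \<alpha> ((\<lambda>j. y)(i := x)) = Fg n (pal a b n \<alpha>) ((\<lambda>j. y)(i := x))"
        by (rule Fm_eq_Fg[OF ab n2 bo]) (use x y in auto)
      then show ?thesis using G.gform[OF i x y] p1[OF i] p2[of i] by simp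
    qed
    show "\<And>i. i \<in> {1..n} \<Longrightarrow> \<alpha> 1 \<in> {a..b} \<and> \<alpha> (n - 1) \<in> {a..b}"
      using aab n2 by auto
  qed
qed

theorem theorem5:
  fixes a b :: real and n :: nat
  assumes "a < b" and "n \<ge> 2"
  shows "(\<forall>\<alpha>. ballots_ok a b n \<alpha> \<longrightarrow>
            (NOM a b n (mvs a b n \<alpha>) \<longleftrightarrow> \<alpha> 1 = a \<and> \<alpha> (n - 1) = b))
       \<and> (\<forall>p. monotone_family a b n p \<and> \<not> dictatorial a b n (gmvs a b n p) \<longrightarrow>
            (NOM a b n (gmvs a b n p) \<longleftrightarrow>
               (\<forall>i\<in>{1..n}. p ({1..n} - {i}) = a \<and> p {i} = b)))"
proof (intro conjI allI impI)
  fix \<alpha> assume bo: "ballots_ok a b n \<alpha>"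
  interpret M: absF a b n "Fm n \<alpha>" "\<lambda>i. \<alpha> 1" "\<lambda>i. \<alpha> (n - 1)"
    by (rule mvs_absF[OF assms bo])
  have e: "mvs a b n \<alpha> = (\<lambda>R. Fm n \<alpha> (\<lambda>j. top a b (R j)))"
    unfolding mvs_def Fm_def by simp
  have le: "\<alpha> 1 \<le> \<alpha> (n - 1)" using bo assms(2) unfolding ballots_ok_def by auto
  have nd: "\<forall>i\<in>{1..n}. \<not> (\<alpha> 1 = b \<and> \<alpha> (n - 1) = a)" using le assms(1) by auto
  have ne: "1 \<in> {1..n}" using assms(2) by simp
  show "NOM a b n (mvs a b n \<alpha>) \<longleftrightarrow> \<alpha> 1 = a \<and> \<alpha> (n - 1) = b"
    unfolding e M.nom_iff[OF nd] using ne by blast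
next
  fix p assume h: "monotone_family a b n p \<and> \<not> dictatorial a b n (gmvs a b n p)"
  interpret G: absF a b n "Fg n p" "\<lambda>i. p ({1..n} - {i})" "\<lambda>i. p {i}"
    by (rule gmvs_absF[OF assms]) (use h in auto)
  have e: "gmvs a b n p = (\<lambda>R. Fg n p (\<lambda>j. top a b (R j)))"
    unfolding gmvs_def Fg_def by simp
  have nd: "\<forall>i\<in>{1..n}. \<not> (p ({1..n} - {i}) = b \<and> p {i} = a)"
    using G.dict h unfolding e by blast
  show "NOM a b n (gmvs a b n p) \<longleftrightarrow> (\<forall>i\<in>{1..n}. p ({1..n} - {i}) = a \<and> p {i} = b)"
    unfolding e by (rule G.nom_iff[OF nd])
qed

end
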